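(* Let $Z$ be a separable real Hilbert space and let $f:Z\to\mathbb{R}$ be a continuous convex function. Then there exist a unique closed linear subspace $X_f$ of $Z$, a unique vector $v_f\in X_f^{\perp}$, and a unique essentially directionally coercive convex function $c_f:X_f\to\mathbb{R}$ such that $$f(z)=c_f(P_{X_f}(z))+\langle v_f,z\rangle\quad\text{for all } z\in Z.$$ Moreover, $X_f=\overline{\mathrm{span}}\{u-w: u\in\partial f(z),\ w\in\partial f(y),\ z,y\in Z\}$, and $v_f=Q_{X_f}(\xi_0)$ for any $z_0\in Z$ and any $\xi_0\in\partial f(z_0)$, where $Q_{X_f}=I-P_{X_f}$ is the orthogonal projection of $Z$ onto $X_f^{\perp}$.
   Context: For a closed linear subspace $X$ of a Hilbert space $Z$, $P_X:Z\to X$ denotes the orthogonal projection and $X^\perp$ the orthogonal complement; $\overline{\mathrm{span}}(V)$ is the closure of the linear span of $V$. For a convex $f:Z\to\mathbb{R}$, $\partial f(x)=\{\xi\in Z: f(y)\ge f(x)+\langle \xi,y-x\rangle \text{ for all } y\in Z\}$. A function $g$ on a Banach space $X$ is directionally coercive if $\lim_{t\to\infty} g(x+tv)=\infty$ for every $x\in X$ and every $v\in X\setminus\{0\}$; it is essentially directionally coercive if there exists a continuous linear functional $\ell\in X^*$ such that $g-\ell$ is directionally coercive. *)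

theory Defs
  imports "HOL-Analysis.Analysis"
begin

definition orth_compl :: "'a::real_inner set \<Rightarrow> 'a set" where
  "orth_compl X = {z. \<forall>x\<in>X. inner z x = 0}"

definition orth_proj :: "'a::real_inner set \<Rightarrow> 'a \<Rightarrow> 'a" where
  "orth_proj X z = (THE p. p \<in> X \<and> z - p \<in> orth_compl X)"

definition subdiff :: "('a::real_inner \<Rightarrow> real) \<Rightarrow> 'a \<Rightarrow> 'a set" where
  "subdiff f x = {\<xi>. \<forall>y. f y \<ge> f x + inner \<xi> (y - x)}"

definition linear_on_subspace :: "'a::real_vector set \<Rightarrow> ('a \<Rightarrow> real) \<Rightarrow> bool" where
  "linear_on_subspace X l \<longleftrightarrow>
     (\<forall>x\<in>X. \<forall>y\<in>X. l (x + y) = l x + l y) \<and> (\<forall>x\<in>X. \<forall>c. l (c *\<^sub>R x) = c * l x)"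

definition dir_coercive_on :: "'a::real_normed_vector set \<Rightarrow> ('a \<Rightarrow> real) \<Rightarrow> bool" where
  "dir_coercive_on X g \<longleftrightarrow>
     (\<forall>x\<in>X. \<forall>v\<in>X. v \<noteq> 0 \<longrightarrow> filterlim (\<lambda>t. g (x + t *\<^sub>R v)) at_top at_top)"

definition ess_dir_coercive_on :: "'a::real_normed_vector set \<Rightarrow> ('a \<Rightarrow> real) \<Rightarrow> bool" where
  "ess_dir_coercive_on X g \<longleftrightarrow>
     (\<exists>l. linear_on_subspace X l \<and> continuous_on X l \<and> dir_coercive_on X (\<lambda>x. g x - l x))"

definition is_decomp :: "('a::real_inner \<Rightarrow> real) \<Rightarrow> 'a set \<Rightarrow> 'a \<Rightarrow> ('a \<Rightarrow> real) \<Rightarrow> bool" where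
  "is_decomp f X v c \<longleftrightarrow>
     subspace X \<and> closed X \<and> v \<in> orth_compl X \<and> convex_on X c \<and> ess_dir_coercive_on X c \<and>
     (\<forall>z. f z = c (orth_proj X z) + inner v z)"

end

theory Submission
  imports Defs
begin


lemma parallelogram_sq:
  fixes x y :: "'b::real_inner"
  shows "(norm (x + y))\<^sup>2 + (norm (x - y))\<^sup>2 = 2 * (norm x)\<^sup>2 + 2 * (norm y)\<^sup>2"
  by (simp add: power2_norm_eq_inner inner_add inner_diff inner_commute)

lemma proj_exists:
  fixes C :: "'b::{real_inner,complete_space} set"
  assumes cl: "closed C" and cv: "convex C" and ne: "C \<noteq> {}"
  shows "\<exists>p\<in>C. \<forall>y\<in>C. norm (z - p) \<le> norm (z - y)"
proof -
  define \<delta> where "\<delta> = Inf ((\<lambda>y. norm (z - y)) ` C)"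
  have bdd: "bdd_below ((\<lambda>y. norm (z - y)) ` C)" by (rule bdd_belowI[of _ 0]) auto
  have dle: "\<delta> \<le> norm (z - y)" if "y \<in> C" for y
    unfolding \<delta>_def using bdd that by (simp add: cInf_lower)
  have d0: "0 \<le> \<delta>" unfolding \<delta>_def using ne by (intro cInf_greatest) auto
  have "\<exists>y\<in>C. (norm (z - y))\<^sup>2 < \<delta>\<^sup>2 + inverse (real (Suc n))" for n
  proof -
    have lt: "\<delta> < sqrt (\<delta>\<^sup>2 + inverse (real (Suc n)))"
      using d0 by (metis add_pos_pos less_add_same_cancel1 inverse_positive_iff_positive of_nat_0_less_iff real_less_rsqrt zero_less_Suc)
    then obtain y where "y \<in> C" "norm (z - y) < sqrt (\<delta>\<^sup>2 + inverse (real (Suc n)))"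
      using cInf_lessD[of "(\<lambda>y. norm (z - y)) ` C"] ne unfolding \<delta>_def by auto
    moreover then have "(norm (z - y))\<^sup>2 < \<delta>\<^sup>2 + inverse (real (Suc n))"
      by (metis norm_ge_zero real_sqrt_abs real_sqrt_less_iff abs_of_nonneg)
    ultimately show ?thesis by blast
  qed
  then obtain Y where YC: "\<And>n. Y n \<in> C" and Ylt: "\<And>n. (norm (z - Y n))\<^sup>2 < \<delta>\<^sup>2 + inverse (real (Suc n))"
    by metis
  have key: "(norm (Y m - Y n))\<^sup>2 \<le> 2 * inverse (real (Suc m)) + 2 * inverse (real (Suc n))" for m n
  proof -
    have mid: "(1/2) *\<^sub>R Y m + (1/2) *\<^sub>R Y n \<in> C"
      using cv YC by (intro convexD) auto
    have "\<delta> \<le> norm (z - ((1/2) *\<^sub>R Y m + (1/2) *\<^sub>R Y n))" using dle[OF mid] .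
    hence "\<delta>\<^sup>2 \<le> (norm (z - ((1/2) *\<^sub>R Y m + (1/2) *\<^sub>R Y n)))\<^sup>2"
      using d0 by (simp add: power_mono)
    moreover have "(norm ((z - Y m) + (z - Y n)))\<^sup>2 = 4 * (norm (z - ((1/2) *\<^sub>R Y m + (1/2) *\<^sub>R Y n)))\<^sup>2"
    proof -
      have "(z - Y m) + (z - Y n) = 2 *\<^sub>R (z - ((1/2) *\<^sub>R Y m + (1/2) *\<^sub>R Y n))"
        by (simp add: algebra_simps scaleR_2)
      thus ?thesis by (simp add: power_mult_distrib)
    qed
    moreover have "(z - Y m) - (z - Y n) = - (Y m - Y n)" by simp
    ultimately show ?thesis
      using parallelogram_sq[of "z - Y m" "z - Y n"] Ylt[of m] Ylt[of n]
      by (simp only: norm_minus_cancel)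
  qed
  have "Cauchy Y"
  proof (rule metric_CauchyI)
    fix e :: real assume e: "e > 0"
    obtain M where M: "inverse (real (Suc M)) < e\<^sup>2 / 4"
      using reals_Archimedean[of "e\<^sup>2/4"] e by auto
    show "\<exists>M. \<forall>m\<ge>M. \<forall>n\<ge>M. dist (Y m) (Y n) < e"
    proof (intro exI allI impI)
      fix m n assume mn: "M \<le> m" "M \<le> n"
      have im: "inverse (real (Suc m)) \<le> inverse (real (Suc M))"
        using mn by (simp add: le_imp_inverse_le)
      have inn: "inverse (real (Suc n)) \<le> inverse (real (Suc M))"
        using mn by (simp add: le_imp_inverse_le)
      have "(dist (Y m) (Y n))\<^sup>2 < e\<^sup>2"
        unfolding dist_norm using key[of m n] im inn M by linarith
      thus "dist (Y m) (Y n) < e" using e by (smt (verit) power_mono zero_le_dist)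
    qed
  qed
  then obtain p where Yp: "Y \<longlonglongrightarrow> p" using Cauchy_convergent_iff convergent_def by blast
  have pC: "p \<in> C" using closed_sequentially[OF cl] YC Yp by blast
  have "(norm (z - p))\<^sup>2 \<le> \<delta>\<^sup>2"
  proof (rule LIMSEQ_le)
    show "(\<lambda>n. (norm (z - Y n))\<^sup>2) \<longlonglongrightarrow> (norm (z - p))\<^sup>2"
      by (intro tendsto_intros Yp)
    show "(\<lambda>n. \<delta>\<^sup>2 + inverse (real (Suc n))) \<longlonglongrightarrow> \<delta>\<^sup>2"
      using tendsto_add[OF tendsto_const LIMSEQ_inverse_real_of_nat] by simp
    show "\<exists>N. \<forall>n\<ge>N. (norm (z - Y n))\<^sup>2 \<le> \<delta>\<^sup>2 + inverse (real (Suc n))"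
      using Ylt less_imp_le by blast
  qed
  hence "norm (z - p) \<le> \<delta>" using d0 by (rule power2_le_imp_le)
  thus ?thesis using pC dle by (meson order_trans)
qed



lemma proj_variational:
  fixes C :: "'b::real_inner set"
  assumes cv: "convex C" and pC: "p \<in> C" and yC: "y \<in> C"
    and min: "\<forall>y\<in>C. norm (z - p) \<le> norm (z - y)"
  shows "inner (z - p) (y - p) \<le> 0"
proof (rule ccontr)
  define a where "a = inner (z - p) (y - p)"
  define b where "b = (norm (y - p))\<^sup>2"
  assume "\<not> inner (z - p) (y - p) \<le> 0"
  hence a0: "a > 0" unfolding a_def by simp
  have ineq: "2 * t * a \<le> t\<^sup>2 * b" if t: "0 < t" "t \<le> 1" for t
  proof -
    have "(1 - t) *\<^sub>R p + t *\<^sub>R y \<in> C" using cv pC yC t by (intro convexD) auto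
    hence "norm (z - p) \<le> norm (z - ((1 - t) *\<^sub>R p + t *\<^sub>R y))" using min by blast
    hence "(norm (z - p))\<^sup>2 \<le> (norm (z - ((1 - t) *\<^sub>R p + t *\<^sub>R y)))\<^sup>2"
      by (simp add: power_mono)
    moreover have e1: "z - ((1 - t) *\<^sub>R p + t *\<^sub>R y) = (z - p) - t *\<^sub>R (y - p)"
      by (simp add: algebra_simps)
    moreover have e2: "(norm ((z - p) - t *\<^sub>R (y - p)))\<^sup>2 = (norm (z - p))\<^sup>2 - 2 * t * a + t\<^sup>2 * b"
      unfolding a_def b_def power2_norm_eq_inner
      by (simp add: inner_diff_left inner_diff_right inner_commute algebra_simps power2_eq_square)
    ultimately show ?thesis unfolding e1 e2 by linarith
  qed
  have b0: "b > 0"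
  proof (rule ccontr)
    assume "\<not> b > 0" hence "b \<le> 0" by simp
    with ineq[of 1] a0 show False by simp
  qed
  define t where "t = min 1 (a / b)"
  have t0: "0 < t" "t \<le> 1" unfolding t_def using a0 b0 by auto
  have "t * (2 * a) \<le> t * (t * b)" using ineq[OF t0] by (simp add: power2_eq_square mult.assoc mult.left_commute)
  hence "2 * a \<le> t * b" using t0(1) by (rule mult_left_le_imp_le)
  moreover have "t \<le> a / b" unfolding t_def by simp
  hence "t * b \<le> a" using b0 by (simp add: pos_le_divide_eq)
  ultimately show False using a0 by simp
qed

lemma orth_proj_ex:
  fixes X :: "'b::{real_inner,complete_space} set"
  assumes "subspace X" "closed X"
  shows "\<exists>p. p \<in> X \<and> z - p \<in> orth_compl X"
proof -
  have cv: "convex X" using assms(1) by (rule subspace_imp_convex)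
  have ne: "X \<noteq> {}" using assms(1) subspace_0 by blast
  obtain p where pX: "p \<in> X" and min: "\<forall>y\<in>X. norm (z - p) \<le> norm (z - y)"
    using proj_exists[OF assms(2) cv ne] by blast
  have "inner (z - p) x = 0" if xX: "x \<in> X" for x
  proof -
    have "p + x \<in> X" "p - x \<in> X" using assms(1) pX xX by (auto intro: subspace_add subspace_diff)
    from proj_variational[OF cv pX this(1) min] proj_variational[OF cv pX this(2) min]
    show ?thesis by (simp add: inner_diff_right)
  qed
  thus ?thesis using pX unfolding orth_compl_def by blast
qed

lemma orth_proj_uniq_aux:
  fixes X :: "'b::real_inner set"
  assumes "subspace X" "p \<in> X" "z - p \<in> orth_compl X" "q \<in> X" "z - q \<in> orth_compl X"
  shows "p = q"
proof -
  have "p - q \<in> X" using assms subspace_diff by blast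
  hence "inner ((z - q) - (z - p)) (p - q) = 0"
    using assms(3,5) unfolding orth_compl_def by (simp add: inner_diff_left)
  hence "inner (p - q) (p - q) = 0" by simp
  thus ?thesis by simp
qed

lemma orth_proj_props:
  fixes X :: "'b::{real_inner,complete_space} set"
  assumes "subspace X" "closed X"
  shows "orth_proj X z \<in> X" "z - orth_proj X z \<in> orth_compl X"
proof -
  obtain p where p: "p \<in> X \<and> z - p \<in> orth_compl X" using orth_proj_ex[OF assms] by blast
  have "orth_proj X z = p" unfolding orth_proj_def
    by (rule the_equality) (use orth_proj_uniq_aux[OF assms(1)] p in blast)+
  thus "orth_proj X z \<in> X" "z - orth_proj X z \<in> orth_compl X" using p by auto
qed

lemma orth_proj_unique:
  fixes X :: "'b::{real_inner,complete_space} set"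
  assumes "subspace X" "closed X" "p \<in> X" "z - p \<in> orth_compl X"
  shows "orth_proj X z = p"
  using orth_proj_uniq_aux[OF assms(1) orth_proj_props[OF assms(1,2)] assms(3,4)] .

lemma orth_proj_id:
  fixes X :: "'b::{real_inner,complete_space} set"
  assumes "subspace X" "closed X" "x \<in> X"
  shows "orth_proj X x = x"
  using orth_proj_unique[OF assms] unfolding orth_compl_def by simp

lemma orth_compl_orth_compl:
  fixes X :: "'b::{real_inner,complete_space} set"
  assumes "subspace X" "closed X" "\<forall>d\<in>orth_compl X. inner w d = 0"
  shows "w \<in> X"
proof -
  let ?p = "orth_proj X w"
  have p: "?p \<in> X" "w - ?p \<in> orth_compl X" using orth_proj_props[OF assms(1,2)] by auto
  have "inner w (w - ?p) = 0" using assms(3) p(2) by blast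
  moreover have "inner ?p (w - ?p) = 0" using p unfolding orth_compl_def by (simp add: inner_commute)
  ultimately have "inner (w - ?p) (w - ?p) = 0" by (simp add: inner_diff_left)
  thus ?thesis using p(1) by simp
qed



lemma approx_subgrad:
  fixes f :: "'a::{real_inner,complete_space} \<Rightarrow> real"
  assumes cont: "continuous_on UNIV f" and cvx: "convex_on UNIV f" and e: "\<epsilon> > 0"
  shows "\<exists>c. \<forall>x. f z - \<epsilon> + inner c (x - z) \<le> f x"
proof -
  define E where "E = epigraph UNIV f"
  have Eeq: "E = {q. f (fst q) \<le> snd q}" unfolding E_def epigraph_def by simp
  have clE: "closed E" unfolding Eeq
    by (intro closed_Collect_le continuous_on_compose2[OF cont] continuous_intros) auto
  have cvE: "convex E" unfolding E_def using cvx by (simp add: convex_epigraph)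
  have neE: "E \<noteq> {}" unfolding Eeq by auto
  define p where "p = (z, f z - \<epsilon>)"
  obtain e where eE: "e \<in> E" and min: "\<forall>y\<in>E. norm (p - e) \<le> norm (p - y)"
    using proj_exists[OF clE cvE neE] by blast
  obtain x1 s1 where e_def: "e = (x1, s1)" by (cases e)
  define a where "a = z - x1"
  define b where "b = (f z - \<epsilon>) - s1"
  have var: "inner a (x - x1) + b * (s - s1) \<le> 0" if "f x \<le> s" for x s
  proof -
    have "(x, s) \<in> E" unfolding Eeq using that by simp
    from proj_variational[OF cvE eE this min]
    show ?thesis unfolding p_def e_def a_def b_def by simp
  qed
  have s1: "f x1 \<le> s1" using eE unfolding Eeq e_def by simp
  have pE: "p \<notin> E" unfolding Eeq p_def using e by simp
  have b0: "b \<le> 0" using var[of x1 "s1 + 1"] s1 by simp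
  have bne: "b \<noteq> 0"
  proof
    assume b: "b = 0"
    have "inner a a \<le> 0" using var[of "x1 + a" "f (x1 + a)"] b by simp
    hence "a = 0" by (metis inner_eq_zero_iff inner_ge_zero order_antisym)
    hence "p = e" using b unfolding p_def e_def a_def b_def by simp
    thus False using pE eE by simp
  qed
  hence bneg: "b < 0" using b0 by simp
  define c where "c = (1 / (- b)) *\<^sub>R a"
  have minor: "s1 + inner c (x - x1) \<le> f x" for x
  proof -
    have "inner a (x - x1) \<le> (- b) * (f x - s1)" using var[of x "f x"] by simp
    moreover have "- b > 0" using bneg by simp
    ultimately have "inner a (x - x1) / (- b) \<le> f x - s1" by (subst pos_divide_le_eq) (auto simp: mult.commute)
    thus ?thesis unfolding c_def by simp
  qed
  have "inner a (z - x1) + b * ((f z - \<epsilon>) - s1) = inner a a + b * b"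
    unfolding a_def b_def by simp
  also have "\<dots> \<ge> 0" by simp
  finally have "(- b) * ((f z - \<epsilon>) - s1) \<le> inner a (z - x1)" by simp
  moreover have "- b > 0" using bneg by simp
  ultimately have "(f z - \<epsilon>) - s1 \<le> inner a (z - x1) / (- b)" by (subst pos_le_divide_eq) (auto simp: mult.commute)
  hence atz: "f z - \<epsilon> \<le> s1 + inner c (z - x1)" unfolding c_def by simp
  have "f z - \<epsilon> + inner c (x - z) \<le> f x" for x
  proof -
    have "inner c (x - x1) = inner c (z - x1) + inner c (x - z)" by (simp add: inner_diff_right)
    thus ?thesis using minor[of x] atz by linarith
  qed
  thus ?thesis by blast
qed



lemma subdiff_nonempty:
  fixes f :: "'a::{real_inner,complete_space} \<Rightarrow> real"
  assumes cont: "continuous_on UNIV f" and cvx: "convex_on UNIV f"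
  shows "\<exists>\<xi>. \<xi> \<in> subdiff f z"
proof -
  obtain r where r: "r > 0" and rball: "\<And>x. dist x z < r \<Longrightarrow> dist (f x) (f z) < 1"
    using cont unfolding continuous_on_iff by (metis UNIV_I zero_less_one)
  define A where "A n = {c. \<forall>x. f z - inverse (real (Suc n)) + inner c (x - z) \<le> f x}" for n
  have clA: "closed (A n)" for n
    unfolding A_def by (intro closed_Collect_all closed_Collect_le continuous_intros)
  have cvA: "convex (A n)" for n
    unfolding convex_def
  proof (intro ballI allI impI)
    fix c1 c2 and u v :: real
    assume c: "c1 \<in> A n" "c2 \<in> A n" and uv: "0 \<le> u" "0 \<le> v" "u + v = 1"
    show "u *\<^sub>R c1 + v *\<^sub>R c2 \<in> A n" unfolding A_def
    proof (intro CollectI allI)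
      fix x
      have vv: "v = 1 - u" using uv by simp
      have "u * (f z - inverse (real (Suc n)) + inner c1 (x - z)) + v * (f z - inverse (real (Suc n)) + inner c2 (x - z)) \<le> u * f x + v * f x"
        using c uv unfolding A_def by (intro add_mono mult_left_mono) auto
      thus "f z - inverse (real (Suc n)) + inner (u *\<^sub>R c1 + v *\<^sub>R c2) (x - z) \<le> f x"
        unfolding vv by (simp add: inner_add_left algebra_simps)
    qed
  qed
  have neA: "A n \<noteq> {}" for n
    using approx_subgrad[OF cont cvx, of "inverse (real (Suc n))" z] unfolding A_def by auto
  have bndA: "norm c \<le> 4 / r" if "c \<in> A n" for c n
  proof (cases "c = 0")
    case True thus ?thesis using r by simp
  next
    case False
    hence nc: "norm c > 0" by simp
    define x where "x = z + (r / 2 / norm c) *\<^sub>R c"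
    have "dist x z = r / 2" unfolding x_def dist_norm using nc r by simp
    hence "dist (f x) (f z) < 1" using rball r by simp
    hence fx: "f x < f z + 1" by (simp add: dist_real_def)
    have "inner c (x - z) = r / 2 * norm c" unfolding x_def using nc
      by (simp add: power2_norm_eq_inner[symmetric] power2_eq_square)
    moreover have "f z - inverse (real (Suc n)) + inner c (x - z) \<le> f x" using that unfolding A_def by blast
    moreover have "inverse (real (Suc n)) \<le> 1" by (simp add: inverse_le_1_iff)
    ultimately have "r / 2 * norm c < 2" using fx by linarith
    hence "r * norm c < 4" by simp
    thus ?thesis using r by (simp add: pos_le_divide_eq mult.commute)
  qed
  have ex: "\<forall>n. \<exists>p. p \<in> A n \<and> (\<forall>y\<in>A n. norm p \<le> norm y)"
  proof
    fix n show "\<exists>p. p \<in> A n \<and> (\<forall>y\<in>A n. norm p \<le> norm y)"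
      using proj_exists[OF clA[of n] cvA[of n] neA[of n], of 0] by (simp add: Bex_def)
  qed
  obtain a where a: "\<forall>n. a n \<in> A n \<and> (\<forall>y\<in>A n. norm (a n) \<le> norm y)"
    using choice[OF ex] by blast
  hence aA: "\<And>n. a n \<in> A n" and amin: "\<And>n y. y \<in> A n \<Longrightarrow> norm (a n) \<le> norm y"
    by auto
  have monoA: "A m \<subseteq> A n" if "n \<le> m" for n m
  proof
    fix c assume "c \<in> A m"
    moreover have "inverse (real (Suc m)) \<le> inverse (real (Suc n))" using that by (simp add: le_imp_inverse_le)
    ultimately show "c \<in> A n" unfolding A_def by (smt (verit) mem_Collect_eq)
  qed
  define h where "h n = (norm (a n))\<^sup>2" for n
  have key: "(norm (a m - a n))\<^sup>2 \<le> 2 * h m - 2 * h n" if "n \<le> m" for n m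
  proof -
    have amn: "a m \<in> A n" using monoA[OF that] aA by blast
    have mid: "(1/2) *\<^sub>R a m + (1/2) *\<^sub>R a n \<in> A n" using cvA amn aA by (intro convexD) auto
    have "norm (a n) \<le> norm ((1/2) *\<^sub>R a m + (1/2) *\<^sub>R a n)" using amin[OF mid] .
    hence "h n \<le> (norm ((1/2) *\<^sub>R a m + (1/2) *\<^sub>R a n))\<^sup>2" unfolding h_def by (simp add: power_mono)
    moreover have "a m + a n = 2 *\<^sub>R ((1/2) *\<^sub>R a m + (1/2) *\<^sub>R a n)" by (simp add: algebra_simps scaleR_2)
    hence "(norm (a m + a n))\<^sup>2 = 4 * (norm ((1/2) *\<^sub>R a m + (1/2) *\<^sub>R a n))\<^sup>2"
      by (simp add: power_mult_distrib)
    ultimately show ?thesis using parallelogram_sq[of "a m" "a n"] unfolding h_def by linarith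
  qed
  have hinc: "incseq h" unfolding incseq_def h_def
    using amin aA monoA by (meson norm_ge_zero power_mono subsetD)
  have hbnd: "h n \<le> (4 / r)\<^sup>2" for n unfolding h_def using bndA[OF aA] by (simp add: power_mono)
  obtain L where "h \<longlonglongrightarrow> L" using incseq_convergent[OF hinc] hbnd by blast
  hence hC: "Cauchy h" by (rule LIMSEQ_imp_Cauchy)
  have "Cauchy a"
  proof (rule metric_CauchyI)
    fix e :: real assume e: "e > 0"
    obtain M where M: "\<And>m n. M \<le> m \<Longrightarrow> M \<le> n \<Longrightarrow> dist (h m) (h n) < e\<^sup>2 / 2"
      using metric_CauchyD[OF hC, of "e\<^sup>2/2"] e by auto
    show "\<exists>M. \<forall>m\<ge>M. \<forall>n\<ge>M. dist (a m) (a n) < e"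
    proof (intro exI allI impI)
      fix m n assume mn: "M \<le> m" "M \<le> n"
      have "(norm (a m - a n))\<^sup>2 < e\<^sup>2"
      proof (cases "n \<le> m")
        case True
        thus ?thesis using key[OF True] M[OF mn] unfolding dist_real_def by arith
      next
        case False
        hence mn2: "m \<le> n" by simp
        show ?thesis using key[OF mn2] M[OF mn] unfolding dist_real_def norm_minus_commute[of "a m" "a n"] by arith
      qed
      thus "dist (a m) (a n) < e" using e unfolding dist_norm by (smt (verit) power_mono norm_ge_zero)
    qed
  qed
  then obtain \<xi> where axi: "a \<longlonglongrightarrow> \<xi>" using Cauchy_convergent_iff convergent_def by blast
  have xiA: "\<xi> \<in> A n" for n
  proof (rule Lim_in_closed_set[OF clA _ _ axi])
    show "\<forall>\<^sub>F x in sequentially. a x \<in> A n"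
      using aA monoA unfolding eventually_sequentially by blast
  qed simp
  have "f z + inner \<xi> (y - z) \<le> f y" for y
  proof (rule ccontr)
    assume "\<not> ?thesis"
    hence "f z + inner \<xi> (y - z) - f y > 0" by simp
    then obtain n where "inverse (real (Suc n)) < f z + inner \<xi> (y - z) - f y"
      using reals_Archimedean by blast
    moreover have "f z - inverse (real (Suc n)) + inner \<xi> (y - z) \<le> f y" using xiA[of n] unfolding A_def by blast
    ultimately show False by linarith
  qed
  thus ?thesis unfolding subdiff_def by blast
qed



lemma sum_lessThan_diff_ivl:
  fixes h :: "nat \<Rightarrow> 'b::ab_group_add"
  assumes "m \<le> n"
  shows "(\<Sum>i<n. h i) - (\<Sum>i<m. h i) = (\<Sum>i\<in>{m..<n}. h i)"
  using sum_diff_nat_ivl[of 0 m n h] assms by (simp add: atLeast0LessThan)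

lemma summable_complete:
  fixes g :: "nat \<Rightarrow> 'b::{real_normed_vector,complete_space}"
  assumes "summable (\<lambda>n. norm (g n))"
  shows "summable g"
proof -
  define P where "P n = (\<Sum>i<n. norm (g i))" for n
  have "Cauchy P" unfolding P_def using assms
    by (simp add: summable_iff_convergent Cauchy_convergent_iff)
  have key: "norm ((\<Sum>i<n. g i) - (\<Sum>i<m. g i)) \<le> P n - P m" if "m \<le> n" for m n
  proof -
    have "norm ((\<Sum>i<n. g i) - (\<Sum>i<m. g i)) = norm (\<Sum>i\<in>{m..<n}. g i)"
      using sum_lessThan_diff_ivl[where h=g, OF that] by simp
    also have "\<dots> \<le> (\<Sum>i\<in>{m..<n}. norm (g i))" by (rule norm_sum)
    also have "\<dots> = P n - P m" unfolding P_def using sum_lessThan_diff_ivl[where h="\<lambda>i. norm (g i)", OF that] by simp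
    finally show ?thesis .
  qed
  have "Cauchy (\<lambda>n. \<Sum>i<n. g i)"
    unfolding Cauchy_iff
  proof (intro allI impI)
    fix e :: real assume e: "e > 0"
    obtain M where M: "\<And>m n. M \<le> m \<Longrightarrow> M \<le> n \<Longrightarrow> norm (P m - P n) < e"
      using \<open>Cauchy P\<close> e unfolding Cauchy_iff by blast
    show "\<exists>M. \<forall>m\<ge>M. \<forall>n\<ge>M. norm ((\<Sum>i<m. g i) - (\<Sum>i<n. g i)) < e"
    proof (intro exI allI impI)
      fix m n assume mn: "M \<le> m" "M \<le> n"
      show "norm ((\<Sum>i<m. g i) - (\<Sum>i<n. g i)) < e"
      proof (cases "m \<le> n")
        case True
        thus ?thesis using key[OF True] M[OF mn] unfolding real_norm_def norm_minus_commute[of "\<Sum>i<m. g i"] by arith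
      next
        case False
        hence "n \<le> m" by simp
        thus ?thesis using key[OF \<open>n \<le> m\<close>] M[OF mn] unfolding real_norm_def by arith
      qed
    qed
  qed
  thus ?thesis by (simp add: summable_iff_convergent Cauchy_convergent_iff)
qed

lemma separable_subset:
  fixes S :: "'b::metric_space set"
  assumes sep: "separable_space (euclidean :: 'b topology)" and ne: "S \<noteq> {}"
  shows "\<exists>T. countable T \<and> T \<subseteq> S \<and> T \<noteq> {} \<and> S \<subseteq> closure T"
proof -
  obtain C :: "'b set" where C0: "countable C" "euclidean closure_of C = topspace euclidean"
    using sep unfolding separable_space_def by blast
  have C: "countable C" "closure C = UNIV" using C0 by simp_all
  define I where "I = {(c, n). c \<in> C \<and> (\<exists>s\<in>S. dist c s < inverse (real (Suc n)))}"
  define pick where "pick = (\<lambda>(c, n). SOME s. s \<in> S \<and> dist c s < inverse (real (Suc n)))"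
  define T where "T = pick ` I"
  have "I \<subseteq> C \<times> UNIV" unfolding I_def by auto
  moreover have "countable (C \<times> (UNIV :: nat set))" using C(1) by (intro countable_SIGMA) auto
  ultimately have "countable I" by (rule countable_subset)
  hence cT: "countable T" unfolding T_def by simp
  have pickI: "pick (c, n) \<in> S \<and> dist c (pick (c, n)) < inverse (real (Suc n))" if "(c, n) \<in> I" for c n
  proof -
    from that obtain s where "s \<in> S" "dist c s < inverse (real (Suc n))" unfolding I_def by auto
    hence "\<exists>s. s \<in> S \<and> dist c s < inverse (real (Suc n))" by blast
    from someI_ex[OF this] show ?thesis unfolding pick_def by simp
  qed
  have TS: "T \<subseteq> S" unfolding T_def using pickI by auto
  have approx: "\<exists>t\<in>T. dist t s < e" if sS: "s \<in> S" and e0: "e > 0" for s e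
  proof -
    obtain n where n: "inverse (real (Suc n)) < e / 2" using reals_Archimedean[of "e/2"] e0 by auto
    have "s \<in> closure C" using C(2) by simp
    then obtain c where c: "c \<in> C" "dist c s < inverse (real (Suc n))"
      unfolding closure_approachable by (meson of_nat_0_less_iff positive_imp_inverse_positive zero_less_Suc)
    hence cnI: "(c, n) \<in> I" unfolding I_def using sS by auto
    have "dist (pick (c, n)) s \<le> dist (pick (c, n)) c + dist c s" by (rule dist_triangle)
    also have "\<dots> < e" using pickI[OF cnI] c n by (simp add: dist_commute)
    finally show ?thesis using cnI unfolding T_def by blast
  qed
  have "S \<subseteq> closure T"
  proof
    fix s assume "s \<in> S"
    thus "s \<in> closure T" unfolding closure_approachable using approx by blast
  qed
  moreover have "T \<noteq> {}" using approx[of _ 1] ne by fastforce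
  ultimately show ?thesis using cT TS by blast
qed



definition Dset :: "('a::real_inner \<Rightarrow> real) \<Rightarrow> 'a set" where
  "Dset f = {u - w | u w. \<exists>z y. u \<in> subdiff f z \<and> w \<in> subdiff f y}"

definition Xf :: "('a::real_inner \<Rightarrow> real) \<Rightarrow> 'a set" where
  "Xf f = closure (span (Dset f))"

lemma subspace_closure_subspace:
  fixes S :: "'b::real_normed_vector set"
  assumes S: "subspace S" shows "subspace (closure S)"
proof (rule subspaceI)
  show "0 \<in> closure S" using S subspace_0 closure_subset by blast
next
  fix x y assume "x \<in> closure S" "y \<in> closure S"
  then obtain a b where a: "\<forall>n. a n \<in> S" "a \<longlonglongrightarrow> x" and b: "\<forall>n. b n \<in> S" "b \<longlonglongrightarrow> y"
    unfolding closure_sequential by blast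
  have "\<forall>n. a n + b n \<in> S" using a b S subspace_add by blast
  moreover have "(\<lambda>n. a n + b n) \<longlonglongrightarrow> x + y" using a b by (intro tendsto_add) auto
  ultimately have "\<exists>s. (\<forall>n. s n \<in> S) \<and> s \<longlonglongrightarrow> x + y" by (intro exI[where x="\<lambda>n. a n + b n"]) simp
  thus "x + y \<in> closure S" unfolding closure_sequential .
next
  fix c :: real and x assume "x \<in> closure S"
  then obtain a where a: "\<forall>n. a n \<in> S" "a \<longlonglongrightarrow> x"
    unfolding closure_sequential by blast
  have "\<forall>n. c *\<^sub>R a n \<in> S" using a S subspace_scale by blast
  moreover have "(\<lambda>n. c *\<^sub>R a n) \<longlonglongrightarrow> c *\<^sub>R x" using a by (intro tendsto_scaleR) auto
  ultimately have "\<exists>s. (\<forall>n. s n \<in> S) \<and> s \<longlonglongrightarrow> c *\<^sub>R x" by (intro exI[where x="\<lambda>n. c *\<^sub>R a n"]) simp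
  thus "c *\<^sub>R x \<in> closure S" unfolding closure_sequential .
qed

lemma orth_compl_add: "d \<in> orth_compl X \<Longrightarrow> e \<in> orth_compl X \<Longrightarrow> d + e \<in> orth_compl X"
  unfolding orth_compl_def by (simp add: inner_add_left)

lemma orth_compl_scale: "d \<in> orth_compl X \<Longrightarrow> t *\<^sub>R d \<in> orth_compl X"
  unfolding orth_compl_def by simp

lemma orth_complD: "d \<in> orth_compl X \<Longrightarrow> x \<in> X \<Longrightarrow> inner d x = 0"
  unfolding orth_compl_def by simp

context
  fixes f :: "'a::{real_inner,complete_space} \<Rightarrow> real"
  assumes cont: "continuous_on UNIV f" and cvx: "convex_on UNIV f"
begin

lemma sub_ex: "\<exists>\<xi>. \<xi> \<in> subdiff f z"
  using subdiff_nonempty[OF cont cvx] .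

lemma X_sub: "subspace (Xf f)" "closed (Xf f)"
  unfolding Xf_def by (auto intro: subspace_closure_subspace)

lemma diff_in_X: "\<xi> \<in> subdiff f z \<Longrightarrow> \<eta> \<in> subdiff f y \<Longrightarrow> \<xi> - \<eta> \<in> Xf f"
  unfolding Xf_def Dset_def by (rule subsetD[OF closure_subset], rule span_base) blast

lemma same_comp:
  assumes "d \<in> orth_compl (Xf f)" "\<xi> \<in> subdiff f z" "\<eta> \<in> subdiff f y"
  shows "inner \<xi> d = inner \<eta> d"
proof -
  have "inner d (\<xi> - \<eta>) = 0" using orth_complD[OF assms(1) diff_in_X[OF assms(2,3)]] .
  thus ?thesis by (simp add: inner_diff_right inner_commute)
qed

lemma lineC:
  assumes d: "d \<in> orth_compl (Xf f)" and x0: "\<xi>0 \<in> subdiff f z0"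
  shows "f (z + t *\<^sub>R d) = f z + t * inner \<xi>0 d"
proof -
  obtain \<xi> where xi: "\<xi> \<in> subdiff f z" using sub_ex by blast
  obtain \<eta> where eta: "\<eta> \<in> subdiff f (z + t *\<^sub>R d)" using sub_ex by blast
  have h1: "f (z + t *\<^sub>R d) \<ge> f z + inner \<xi> ((z + t *\<^sub>R d) - z)" using xi unfolding subdiff_def by blast
  have h2: "f z \<ge> f (z + t *\<^sub>R d) + inner \<eta> (z - (z + t *\<^sub>R d))" using eta unfolding subdiff_def by blast
  have e1: "inner \<xi> d = inner \<xi>0 d" using same_comp[OF d xi x0] .
  have e2: "inner \<eta> d = inner \<xi>0 d" using same_comp[OF d eta x0] .
  show ?thesis using h1 h2 e1 e2 by (simp add: inner_diff_right)
qed

lemma decomp_eq: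
  assumes x0: "\<xi>0 \<in> subdiff f z0"
  shows "f z = f (orth_proj (Xf f) z) + inner (\<xi>0 - orth_proj (Xf f) \<xi>0) z"
proof -
  let ?P = "orth_proj (Xf f)"
  define d where "d = z - ?P z"
  have d: "d \<in> orth_compl (Xf f)" unfolding d_def using orth_proj_props[OF X_sub] by blast
  have Pz: "?P z \<in> Xf f" and Px: "?P \<xi>0 \<in> Xf f" using orth_proj_props[OF X_sub] by blast+
  have v: "\<xi>0 - ?P \<xi>0 \<in> orth_compl (Xf f)" using orth_proj_props[OF X_sub] by blast
  have "f z = f (?P z + 1 *\<^sub>R d)" unfolding d_def by simp
  also have "\<dots> = f (?P z) + inner \<xi>0 d" using lineC[OF d x0, of "?P z" 1] by simp
  also have "inner \<xi>0 d = inner (\<xi>0 - ?P \<xi>0) z"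
  proof -
    have a: "inner d (?P \<xi>0) = 0" using orth_complD[OF d Px] .
    have b: "inner (\<xi>0 - ?P \<xi>0) (?P z) = 0" using orth_complD[OF v Pz] .
    show ?thesis using a b unfolding d_def
      by (simp add: inner_diff_left inner_diff_right inner_commute)
  qed
  finally show ?thesis .
qed

lemma uniq:
  assumes dec: "is_decomp f X' v' c'"
  shows "X' = Xf f" "\<forall>z \<xi>. \<xi> \<in> subdiff f z \<longrightarrow> v' = \<xi> - orth_proj X' \<xi>" "\<forall>x\<in>X'. c' x = f x"
proof -
  have sub: "subspace X'" and cl: "closed X'" and v': "v' \<in> orth_compl X'"
    and ess: "ess_dir_coercive_on X' c'" and eq: "\<And>z. f z = c' (orth_proj X' z) + inner v' z"
    using dec unfolding is_decomp_def by auto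
  let ?P' = "orth_proj X'"
  have a: "f (z + t *\<^sub>R d) = f z + t * inner v' d" if d: "d \<in> orth_compl X'" for z t d
  proof -
    have "?P' (z + t *\<^sub>R d) = ?P' z"
    proof (rule orth_proj_unique[OF sub cl])
      show "?P' z \<in> X'" using orth_proj_props[OF sub cl] by blast
      have "(z + t *\<^sub>R d) - ?P' z = (z - ?P' z) + t *\<^sub>R d" by simp
      thus "z + t *\<^sub>R d - ?P' z \<in> orth_compl X'"
        using orth_proj_props[OF sub cl] orth_compl_add orth_compl_scale d by metis
    qed
    thus ?thesis using eq[of "z + t *\<^sub>R d"] eq[of z] by (simp add: inner_add_right)
  qed
  have b: "\<xi> - v' \<in> X'" if xi: "\<xi> \<in> subdiff f z" for \<xi> z
  proof (rule orth_compl_orth_compl[OF sub cl], intro ballI)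
    fix d assume d: "d \<in> orth_compl X'"
    have "f (z + 1 *\<^sub>R d) \<ge> f z + inner \<xi> ((z + 1 *\<^sub>R d) - z)" using xi unfolding subdiff_def by blast
    hence i1: "inner \<xi> d \<le> inner v' d" using a[OF d, of z 1] by simp
    have "f (z + (-1) *\<^sub>R d) \<ge> f z + inner \<xi> ((z + (-1) *\<^sub>R d) - z)" using xi unfolding subdiff_def by blast
    hence i2: "inner v' d \<le> inner \<xi> d" using a[OF d, of z "-1"] by simp
    show "inner (\<xi> - v') d = 0" using i1 i2 by (simp add: inner_diff_left)
  qed
  show c: "\<forall>z \<xi>. \<xi> \<in> subdiff f z \<longrightarrow> v' = \<xi> - ?P' \<xi>"
  proof (intro allI impI)
    fix z \<xi> assume xi: "\<xi> \<in> subdiff f z"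
    have "?P' \<xi> = \<xi> - v'" using orth_proj_unique[OF sub cl b[OF xi]] v' by simp
    thus "v' = \<xi> - ?P' \<xi>" by simp
  qed
  have dsub: "Xf f \<subseteq> X'"
  proof -
    have "Dset f \<subseteq> X'"
    proof
      fix x assume "x \<in> Dset f"
      then obtain u w z y where x: "x = u - w" "u \<in> subdiff f z" "w \<in> subdiff f y"
        unfolding Dset_def by blast
      have "(u - v') - (w - v') \<in> X'" using b[OF x(2)] b[OF x(3)] sub subspace_diff by blast
      thus "x \<in> X'" using x(1) by simp
    qed
    hence "span (Dset f) \<subseteq> X'" using span_minimal sub by blast
    thus ?thesis unfolding Xf_def using closure_minimal cl by blast
  qed
  have cf: "c' x = f x" if x: "x \<in> X'" for x
    using eq[of x] orth_proj_id[OF sub cl x] orth_complD[OF v' x] by (simp add: inner_commute)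
  show "\<forall>x\<in>X'. c' x = f x" using cf by blast
  have "X' \<subseteq> Xf f"
  proof
    fix x' assume x': "x' \<in> X'"
    let ?P = "orth_proj (Xf f)"
    define d where "d = x' - ?P x'"
    have dX: "d \<in> orth_compl (Xf f)" unfolding d_def using orth_proj_props[OF X_sub] by blast
    have PX: "?P x' \<in> Xf f" using orth_proj_props[OF X_sub] by blast
    have dX': "d \<in> X'" unfolding d_def using x' dsub PX sub subspace_diff by blast
    obtain \<xi>0 where x0: "\<xi>0 \<in> subdiff f 0" using sub_ex by blast
    define m where "m = inner \<xi>0 d"
    have cline: "c' (t *\<^sub>R d) = f 0 + t * m" for t
    proof -
      have "t *\<^sub>R d \<in> X'" using dX' sub subspace_scale by blast
      hence "c' (t *\<^sub>R d) = f (t *\<^sub>R d)" by (rule cf)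
      also have "\<dots> = f 0 + t * m" using lineC[OF dX x0, of 0 t] unfolding m_def by simp
      finally show ?thesis .
    qed
    obtain l where lin: "linear_on_subspace X' l" and co: "dir_coercive_on X' (\<lambda>x. c' x - l x)"
      using ess unfolding ess_dir_coercive_on_def by blast
    have "d = 0"
    proof (rule ccontr)
      assume dn: "d \<noteq> 0"
      have ndX': "- d \<in> X'" using dX' sub subspace_neg by blast
      have z0: "0 \<in> X'" using sub subspace_0 by blast
      have lsc: "l (t *\<^sub>R d) = t * l d" for t using lin dX' unfolding linear_on_subspace_def by blast
      have f1: "filterlim (\<lambda>t. c' (0 + t *\<^sub>R d) - l (0 + t *\<^sub>R d)) at_top at_top"
        using co z0 dX' dn unfolding dir_coercive_on_def by blast
      have f2: "filterlim (\<lambda>t. c' (0 + t *\<^sub>R (- d)) - l (0 + t *\<^sub>R (- d))) at_top at_top"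
        using co z0 ndX' dn unfolding dir_coercive_on_def by (metis neg_equal_0_iff_equal)
      have g1: "c' (0 + t *\<^sub>R d) - l (0 + t *\<^sub>R d) = f 0 + t * m - t * l d" for t
        using cline[of t] lsc[of t] by simp
      have g2: "c' (0 + t *\<^sub>R (- d)) - l (0 + t *\<^sub>R (- d)) = f 0 - t * m + t * l d" for t
      proof -
        have "t *\<^sub>R (- d) = (- t) *\<^sub>R d" by simp
        thus ?thesis using cline[of "-t"] lsc[of "-t"] by simp
      qed
      have "eventually (\<lambda>t. f 0 + 1 \<le> f 0 + t * m - t * l d) at_top"
        using f1 unfolding g1 filterlim_at_top by blast
      moreover have "eventually (\<lambda>t. f 0 + 1 \<le> f 0 - t * m + t * l d) at_top"
        using f2 unfolding g2 filterlim_at_top by blast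
      ultimately have "eventually (\<lambda>t::real. False) at_top"
        by eventually_elim simp
      thus False by simp
    qed
    thus "x' \<in> Xf f" using PX unfolding d_def by simp
  qed
  thus "X' = Xf f" using dsub by blast
qed

end



lemma ess_lemma:
  fixes f :: "'a::{real_inner,complete_space} \<Rightarrow> real"
  assumes cont: "continuous_on UNIV f" and cvx: "convex_on UNIV f"
    and sep: "separable_space (euclidean :: 'a topology)"
  shows "\<exists>\<xi>b. dir_coercive_on (Xf f) (\<lambda>x. f x - inner \<xi>b x)"
proof -
  define S where "S = {\<xi>. \<exists>z. \<xi> \<in> subdiff f z}"
  have Sne: "S \<noteq> {}" unfolding S_def using sub_ex[OF cont cvx] by blast
  obtain T where T: "countable T" "T \<subseteq> S" "T \<noteq> {}" "S \<subseteq> closure T"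
    using separable_subset[OF sep Sne] by blast
  define xs where "xs n = from_nat_into T n" for n
  have rT: "range xs = T" unfolding xs_def using T by simp
  define \<beta> where "\<beta> n = (1/2::real)^n / (1 + norm (xs n))" for n
  have \<beta>pos: "\<beta> n > 0" for n unfolding \<beta>_def by (simp add: add_pos_nonneg)
  have geo: "summable (\<lambda>n. (1/2::real)^n)" by (rule summable_geometric) simp
  have \<beta>le: "\<beta> n \<le> (1/2)^n" for n
  proof -
    have "(1/2::real)^n / (1 + norm (xs n)) \<le> (1/2)^n / 1"
      by (rule divide_left_mono) (auto simp: add_pos_nonneg)
    thus ?thesis unfolding \<beta>_def by simp
  qed
  have nle: "norm (\<beta> n *\<^sub>R xs n) \<le> (1/2)^n" for n
  proof -
    have p: "0 < 1 + norm (xs n)" by (simp add: add_pos_nonneg)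
    have q: "norm (xs n) / (1 + norm (xs n)) \<le> 1" by (subst pos_divide_le_eq[OF p]) simp
    have "norm (\<beta> n *\<^sub>R xs n) = (1/2)^n * (norm (xs n) / (1 + norm (xs n)))"
      using \<beta>pos[of n] unfolding \<beta>_def by simp
    also have "\<dots> \<le> (1/2)^n * 1" by (rule mult_left_mono[OF q]) simp
    finally show ?thesis by simp
  qed
  have s\<beta>: "summable \<beta>"
    by (rule summable_comparison_test'[OF geo, where N=0]) (use \<beta>le \<beta>pos in \<open>auto simp: less_imp_le\<close>)
  have "summable (\<lambda>n. norm (\<beta> n *\<^sub>R xs n))"
    by (rule summable_comparison_test'[OF geo, where N=0]) (use nle in auto)
  hence sg: "summable (\<lambda>n. \<beta> n *\<^sub>R xs n)" by (rule summable_complete)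
  define \<sigma> where "\<sigma> = suminf (\<lambda>n. \<beta> n *\<^sub>R xs n)"
  have hs: "(\<lambda>n. \<beta> n *\<^sub>R xs n) sums \<sigma>" unfolding \<sigma>_def using sg by (rule summable_sums)
  define K where "K = suminf \<beta>"
  have K0: "K > 0" unfolding K_def using s\<beta> \<beta>pos by (rule suminf_pos)
  have \<beta>sums: "\<beta> sums K" unfolding K_def using s\<beta> by (rule summable_sums)
  define \<xi>b where "\<xi>b = (1 / K) *\<^sub>R \<sigma>"
  have isums: "(\<lambda>n. \<beta> n * inner (xs n) d) sums inner \<sigma> d" for d
  proof -
    have "(\<lambda>n. \<Sum>i<n. \<beta> i *\<^sub>R xs i) \<longlonglongrightarrow> \<sigma>" using hs unfolding sums_def .
    hence "(\<lambda>n. inner (\<Sum>i<n. \<beta> i *\<^sub>R xs i) d) \<longlonglongrightarrow> inner \<sigma> d"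
      by (intro tendsto_intros)
    thus ?thesis unfolding sums_def by (simp add: inner_sum_left)
  qed
  have "dir_coercive_on (Xf f) (\<lambda>x. f x - inner \<xi>b x)"
    unfolding dir_coercive_on_def
  proof (intro ballI impI)
    fix x d assume dX: "d \<in> Xf f" and dn: "d \<noteq> 0"
    have "\<exists>\<xi>\<in>S. inner \<xi>b d < inner \<xi> d"
    proof (rule ccontr)
      assume "\<not> ?thesis"
      hence le: "\<forall>\<xi>\<in>S. inner \<xi> d \<le> inner \<xi>b d" by auto
      define m where "m = inner \<xi>b d"
      have Km: "K * m = inner \<sigma> d" unfolding m_def \<xi>b_def using K0 by simp
      define c where "c n = \<beta> n * m - \<beta> n * inner (xs n) d" for n
      have "c sums (K * m - inner \<sigma> d)" unfolding c_def
        by (intro sums_diff sums_mult2 \<beta>sums isums)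
      hence c0: "c sums 0" using Km by simp
      have cnn: "0 \<le> c n" for n
      proof -
        have "xs n \<in> S" using rT T(2) by blast
        hence "inner (xs n) d \<le> m" using le unfolding m_def by blast
        thus ?thesis unfolding c_def using \<beta>pos[of n] by (simp add: right_diff_distrib[symmetric])
      qed
      have "\<forall>n. c n = 0"
        using suminf_eq_zero_iff[OF sums_summable[OF c0] cnn] sums_unique[OF c0] by simp
      hence xsm: "inner (xs n) d = m" for n
        using \<beta>pos[of n] unfolding c_def by (metis right_diff_distrib eq_iff_diff_eq_0 mult_eq_0_iff less_irrefl)
      have "T \<subseteq> {\<xi>. inner \<xi> d = m}" using rT xsm by blast
      moreover have "closed {\<xi>. inner \<xi> d = m}" by (intro closed_Collect_eq continuous_intros)
      ultimately have "closure T \<subseteq> {\<xi>. inner \<xi> d = m}" by (rule closure_minimal)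
      hence Sm: "\<forall>\<xi>\<in>S. inner \<xi> d = m" using T(4) by blast
      have Dorth: "inner d y = 0" if "y \<in> Dset f" for y
      proof -
        from that obtain u w z z' where y: "y = u - w" "u \<in> subdiff f z" "w \<in> subdiff f z'"
          unfolding Dset_def by blast
        have "u \<in> S" "w \<in> S" using y unfolding S_def by blast+
        hence "inner u d = m" "inner w d = m" using Sm by blast+
        thus ?thesis using y(1) by (simp add: inner_diff_right inner_commute)
      qed
      have "span (Dset f) \<subseteq> {y. inner d y = 0}"
        using orthogonal_to_span Dorth unfolding orthogonal_def by blast
      moreover have "closed {y. inner d y = 0}" by (intro closed_Collect_eq continuous_intros)
      ultimately have "Xf f \<subseteq> {y. inner d y = 0}" unfolding Xf_def by (rule closure_minimal)
      hence "inner d d = 0" using dX by blast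
      thus False using dn by simp
    qed
    then obtain \<xi> where xiS: "\<xi> \<in> S" and agt: "inner \<xi>b d < inner \<xi> d" by blast
    then obtain y where xi: "\<xi> \<in> subdiff f y" unfolding S_def by blast
    define a where "a = inner \<xi> d - inner \<xi>b d"
    have a0: "a > 0" unfolding a_def using agt by simp
    define g where "g z = f z - inner \<xi>b z" for z
    have gsub: "g y + s * a \<le> g (y + s *\<^sub>R d)" for s
    proof -
      have "f (y + s *\<^sub>R d) \<ge> f y + inner \<xi> ((y + s *\<^sub>R d) - y)" using xi unfolding subdiff_def by blast
      thus ?thesis unfolding g_def a_def by (simp add: inner_add_right algebra_simps)
    qed
    have gconv: "g (y + (t/2) *\<^sub>R d) \<le> (1/2) * g (2 *\<^sub>R y - x) + (1/2) * g (x + t *\<^sub>R d)" for t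
    proof -
      have F1: "f ((1 - 1/2) *\<^sub>R (2 *\<^sub>R y - x) + (1/2) *\<^sub>R (x + t *\<^sub>R d))
            \<le> (1 - 1/2) * f (2 *\<^sub>R y - x) + (1/2) * f (x + t *\<^sub>R d)"
        by (rule convex_onD[OF cvx]) auto
      have E1: "(1 - 1/2) *\<^sub>R (2 *\<^sub>R y - x) + (1/2) *\<^sub>R (x + t *\<^sub>R d) = y + (t/2) *\<^sub>R d"
        by (simp add: algebra_simps)
      have I1: "inner \<xi>b (y + (t/2) *\<^sub>R d) = (1/2) * inner \<xi>b (2 *\<^sub>R y - x) + (1/2) * inner \<xi>b (x + t *\<^sub>R d)"
        by (simp add: inner_add_right inner_diff_right algebra_simps)
      have F2: "f (y + (t/2) *\<^sub>R d) \<le> (1 - 1/2) * f (2 *\<^sub>R y - x) + (1/2) * f (x + t *\<^sub>R d)"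
        using F1 unfolding E1 .
      show ?thesis unfolding g_def using F2 I1 by (simp add: field_simps)
    qed
    define C where "C = 2 * g y - g (2 *\<^sub>R y - x)"
    have low: "C + t * a \<le> g (x + t *\<^sub>R d)" for t
      using gconv[of t] gsub[of "t/2"] unfolding C_def by simp
    have "filterlim (\<lambda>t. g (x + t *\<^sub>R d)) at_top at_top"
      unfolding filterlim_at_top
    proof
      fix Z :: real
      show "eventually (\<lambda>t. Z \<le> g (x + t *\<^sub>R d)) at_top"
        unfolding eventually_at_top_linorder
      proof (intro exI allI impI)
        fix t assume "(Z - C) / a \<le> t"
        hence "Z - C \<le> t * a" using a0 by (simp add: divide_le_eq)
        thus "Z \<le> g (x + t *\<^sub>R d)" using low[of t] by linarith
      qed
    qed
    thus "filterlim (\<lambda>t. f (x + t *\<^sub>R d) - inner \<xi>b (x + t *\<^sub>R d)) at_top at_top"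
      unfolding g_def .
  qed
  thus ?thesis by blast
qed



theorem mainTheorem1:
  fixes f :: "'a::{real_inner, complete_space} \<Rightarrow> real"
  assumes "separable_space (euclidean :: 'a topology)"
    and "continuous_on UNIV f"
    and "convex_on UNIV f"
  shows "\<exists>X v c. is_decomp f X v c \<and>
           (\<forall>X' v' c'. is_decomp f X' v' c' \<longrightarrow> X' = X \<and> v' = v \<and> (\<forall>x\<in>X. c' x = c x)) \<and>
           X = closure (span {u - w | u w. \<exists>z y. u \<in> subdiff f z \<and> w \<in> subdiff f y}) \<and>
           (\<forall>z0 \<xi>0. \<xi>0 \<in> subdiff f z0 \<longrightarrow> v = \<xi>0 - orth_proj X \<xi>0)"
proof -
  note cont = assms(2) and cvx = assms(3)
  obtain \<xi>0 where x0: "\<xi>0 \<in> subdiff f 0" using sub_ex[OF cont cvx] by blast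
  define X where "X = Xf f"
  define v where "v = \<xi>0 - orth_proj X \<xi>0"
  have sub: "subspace X" and cl: "closed X" unfolding X_def using X_sub[OF cont cvx] by auto
  have vX: "v \<in> orth_compl X" unfolding v_def using orth_proj_props[OF sub cl] by blast
  have cX: "convex_on X f" using convex_on_subset[OF cvx subset_UNIV subspace_imp_convex[OF sub]] .
  obtain \<xi>b where co: "dir_coercive_on X (\<lambda>x. f x - inner \<xi>b x)"
    using ess_lemma[OF cont cvx assms(1)] unfolding X_def by blast
  have ess: "ess_dir_coercive_on X f" unfolding ess_dir_coercive_on_def
  proof (intro exI conjI)
    show "linear_on_subspace X (\<lambda>x. inner \<xi>b x)" unfolding linear_on_subspace_def
      by (simp add: inner_add_right)
    show "continuous_on X (\<lambda>x. inner \<xi>b x)" by (intro continuous_intros)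
    show "dir_coercive_on X (\<lambda>x. f x - inner \<xi>b x)" by (rule co)
  qed
  have eq: "f z = f (orth_proj X z) + inner v z" for z
    unfolding X_def v_def using decomp_eq[OF cont cvx x0] .
  have dec: "is_decomp f X v f" unfolding is_decomp_def using sub cl vX cX ess eq by blast
  have U: "X' = X \<and> v' = v \<and> (\<forall>x\<in>X. c' x = f x)" if d: "is_decomp f X' v' c'" for X' v' c'
  proof -
    have X': "X' = X" using uniq(1)[OF cont cvx d] unfolding X_def .
    moreover have "v' = \<xi>0 - orth_proj X' \<xi>0" using uniq(2)[OF cont cvx d] x0 by blast
    hence "v' = v" using X' unfolding v_def by simp
    moreover have "\<forall>x\<in>X. c' x = f x" using uniq(3)[OF cont cvx d] X' by simp
    ultimately show ?thesis by blast
  qed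
  have XE: "X = closure (span {u - w | u w. \<exists>z y. u \<in> subdiff f z \<and> w \<in> subdiff f y})"
    unfolding X_def Xf_def Dset_def ..
  have V: "\<forall>z0 \<xi>. \<xi> \<in> subdiff f z0 \<longrightarrow> v = \<xi> - orth_proj X \<xi>"
    using uniq(2)[OF cont cvx dec] .
  show ?thesis using dec U XE V by blast
qed

end
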